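(* Let $d\ge1$, let $X$ be a lazy simple random walk on $\mathbb{Z}^d$ started at a fixed point, and let $f:\{0,1,2,\dots\}\to\mathbb{Z}^d$ be any function. Then for all $t\in\mathbb{N}$ and all $n\in\mathbb{N}$, \[ \mathbb{E}\Big[\mathrm{vol}\Big(\bigcup_{s=0}^{t}\big(X_s+f(s)+Q_n\big)\Big)\Big]\ \ge\ \mathbb{E}\Big[\mathrm{vol}\Big(\bigcup_{s=0}^{t}\big(X_s+Q_n\big)\Big)\Big], \] where $Q_n=[-n,n]^d\cap\mathbb{Z}^d$.
   Context: The lazy simple random walk on $\mathbb{Z}^d$ stays put with probability $1/2$ and otherwise moves from $x$ to $x\pm e_i$ ($i=1,\dots,d$), each with probability $1/(4d)$. For a finite set $S\subseteq\mathbb{Z}^d$, $\mathrm{vol}(S)$ is its cardinality, and $x+S=\{x+y:y\in S\}$. *)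

theory Defs
  imports "HOL-Analysis.Analysis" "HOL-Probability.Probability"
begin

text \<open>Points of Z^d are modelled as int ^ 'd for a finite index type 'd, so d = CARD('d) >= 1.\<close>

definition lazy_step :: "int ^ 'd::finite \<Rightarrow> (int ^ 'd) pmf" where
  "lazy_step x = bind_pmf (bernoulli_pmf (1/2)) (\<lambda>stay.
     if stay then return_pmf x
     else map_pmf (\<lambda>(i, pos). x + axis i (if pos then 1 else -1))
                  (pmf_of_set (UNIV :: ('d \<times> bool) set)))"

text \<open>Distribution of the trajectory (X_0, ..., X_t) of the lazy walk started at x0,
  as a list of length t+1 whose s-th entry is X_s.\<close>
fun lazy_walk :: "int ^ 'd::finite \<Rightarrow> nat \<Rightarrow> (int ^ 'd) list pmf" where
  "lazy_walk x0 0 = return_pmf [x0]"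
| "lazy_walk x0 (Suc t) = bind_pmf (lazy_walk x0 t)
     (\<lambda>xs. map_pmf (\<lambda>y. xs @ [y]) (lazy_step (last xs)))"

definition box_Q :: "nat \<Rightarrow> (int ^ 'd::finite) set" where
  "box_Q n = {x. \<forall>i. \<bar>x $ i\<bar> \<le> int n}"

definition vol :: "'a set \<Rightarrow> real" where
  "vol S = real (card S)"

end

theory Submission
  imports Defs
begin



definition pk :: "int ^ 'd::finite \<Rightarrow> real" where "pk v = pmf (lazy_step 0) v"

definition negc :: "'d::finite \<Rightarrow> int ^ 'd \<Rightarrow> int ^ 'd" where
  "negc i v = (\<chi> j. if j = i then - (v $ j) else v $ j)"

lemma lazy_step_shift: "lazy_step x = map_pmf ((+) x) (lazy_step 0)"
  unfolding lazy_step_def map_bind_pmf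
proof (rule bind_pmf_cong[OF refl])
  fix stay :: bool
  show "(if stay then return_pmf x
         else map_pmf (\<lambda>(i, pos). x + axis i (if pos then 1 else - 1)) (pmf_of_set UNIV)) =
        map_pmf ((+) x) (if stay then return_pmf 0
         else map_pmf (\<lambda>(i, pos). 0 + axis i (if pos then 1 else - 1)) (pmf_of_set UNIV))"
  proof (cases stay)
    case True thus ?thesis by simp
  next
    case False
    have "((+) x) \<circ> (\<lambda>(i, pos). 0 + axis i (if pos then 1 else - 1::int)) = (\<lambda>(i::'a, pos). x + axis i (if pos then 1 else - 1))"
      by (rule ext) (simp add: case_prod_unfold)
    thus ?thesis using False by (simp only: if_False pmf.map_comp)
  qed
qed

lemma pmf_lazy_step: "pmf (lazy_step x) y = pk (y - x)"
proof -
  have "pmf (lazy_step x) y = pmf (map_pmf ((+) x) (lazy_step 0)) (x + (y - x))"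
    by (subst lazy_step_shift) simp
  also have "\<dots> = pk (y - x)" unfolding pk_def by (rule pmf_map_inj') (simp add: inj_def)
  finally show ?thesis .
qed

lemma set_lazy_step0: "set_pmf (lazy_step (0::int^'d::finite)) \<subseteq>
   insert 0 (range (\<lambda>(i::'d, pos). axis i (if pos then 1 else -1::int)))"
proof
  fix x assume "x \<in> set_pmf (lazy_step (0::int^'d))"
  then obtain b where "x \<in> set_pmf (if b then return_pmf 0 else map_pmf (\<lambda>(i::'d, pos). 0 + axis i (if pos then 1 else -1::int))
                  (pmf_of_set UNIV))" by (auto simp: lazy_step_def set_bind_pmf)
  thus "x \<in> insert 0 (range (\<lambda>(i::'d, pos). axis i (if pos then 1 else -1::int)))"
    by (cases b) auto
qed

lemma set_lazy_step: "set_pmf (lazy_step x) = (+) x ` set_pmf (lazy_step 0)"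
  by (subst lazy_step_shift) simp

lemma finite_set_lazy_step: "finite (set_pmf (lazy_step (x::int^'d::finite)))"
proof -
  have "finite (range (\<lambda>(i::'d, pos). axis i (if pos then 1 else -1::int)))"
    by (rule finite_imageI) simp
  then have "finite (set_pmf (lazy_step (0::int^'d)))"
    using finite_subset[OF set_lazy_step0] by blast
  thus ?thesis using set_lazy_step[of x] by simp
qed

lemma axis_ne0: "axis i (if pos then 1 else -1::int) \<noteq> 0"
  by (cases pos) (auto simp: axis_eq_0_iff)

lemma pk_formula: fixes v :: "int^'d::finite" shows "pk v = (if v = 0 then 1/2 else 0) + 1/2 * pmf (map_pmf (\<lambda>(i::'d, pos). axis i (if pos then 1 else -1::int))
                  (pmf_of_set UNIV)) v"
proof -
  have "pk v = (\<integral>b. pmf (if b then return_pmf 0 else map_pmf (\<lambda>(i::'d, pos). 0 + axis i (if pos then 1 else -1::int))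
                  (pmf_of_set UNIV)) v \<partial>measure_pmf (bernoulli_pmf (1/2)))"
    unfolding pk_def lazy_step_def pmf_bind ..
  also have "\<dots> = (if v = 0 then 1/2 else 0) + 1/2 * pmf (map_pmf (\<lambda>(i::'d, pos). 0 + axis i (if pos then 1 else -1::int))
                  (pmf_of_set UNIV)) v"
    by (subst integral_bernoulli_pmf) (auto simp: pmf_return)
  finally show ?thesis by simp
qed

lemma pk_0: "pk (0::int^'d::finite) = 1/2"
proof -
  have "pmf (map_pmf (\<lambda>(i::'d, pos). axis i (if pos then 1 else -1::int)) (pmf_of_set UNIV)) 0 = 0"
    by (rule pmf_eq_0_set_pmf[THEN iffD2]) (auto split: if_splits)
  thus ?thesis by (simp add: pk_formula)
qed

lemma pk_le: "v \<noteq> 0 \<Longrightarrow> pk v \<le> 1/2"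
  by (simp add: pk_formula pmf_le_1)

lemma pk_nonneg: "0 \<le> pk v" by (simp add: pk_def)

lemma pk_supp: fixes v :: "int^'d::finite" shows "pk v \<noteq> 0 \<Longrightarrow> v = 0 \<or> v \<in> range (\<lambda>(i::'d, pos). axis i (if pos then 1 else -1::int))"
proof -
  assume "pk v \<noteq> 0"
  then have "v \<in> set_pmf (lazy_step 0)" by (simp add: pk_def set_pmf_iff)
  thus ?thesis using set_lazy_step0 by auto
qed

lemma negc_axis: "negc i (axis j (if pos then 1 else -1::int)) =
   axis j (if (if j = i then \<not> pos else pos) then 1 else -1)"
  by (auto simp: negc_def axis_def vec_eq_iff)

lemma negc_negc[simp]: "negc i (negc i v) = v" by (simp add: negc_def vec_eq_iff)
lemma negc_inj: "inj (negc i)" by (metis injI negc_negc)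

lemma lazy_step0_neg: "map_pmf (negc i) (lazy_step 0) = lazy_step (0::int^'d::finite)"
proof -
  define h where "h = (\<lambda>(j::'d, pos::bool). (j, if j = i then \<not> pos else pos))"
  have hinj: "inj h" by (auto simp: h_def inj_def split: if_splits)
  have hsurj: "h ` UNIV = UNIV"
  proof -
    have "h (h p) = p" for p by (cases p) (auto simp: h_def)
    thus ?thesis by (metis surjI)
  qed
  have U: "map_pmf h (pmf_of_set UNIV) = pmf_of_set (UNIV :: ('d \<times> bool) set)"
    using map_pmf_of_set_inj[of h UNIV] hinj hsurj by simp
  have "map_pmf (negc i) (map_pmf (\<lambda>(j, pos). 0 + axis j (if pos then 1 else -1::int)) (pmf_of_set UNIV))
     = map_pmf (\<lambda>(j, pos). 0 + axis j (if pos then 1 else -1::int)) (map_pmf h (pmf_of_set (UNIV :: ('d \<times> bool) set)))"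
    by (simp add: pmf.map_comp o_def case_prod_unfold negc_axis h_def)
  thus ?thesis unfolding lazy_step_def map_bind_pmf U
    by (intro bind_pmf_cong refl) (auto simp: negc_def vec_eq_iff)
qed

lemma pk_neg: "pk (negc i v) = pk v"
proof -
  have "pk (negc i v) = pmf (map_pmf (negc i) (lazy_step 0)) (negc i v)"
    by (simp add: lazy_step0_neg pk_def)
  also have "\<dots> = pk v" unfolding pk_def by (rule pmf_map_inj'[OF negc_inj])
  finally show ?thesis .
qed

lemma pk_mono:
  assumes agree: "\<And>j. j \<noteq> i \<Longrightarrow> u $ j = v $ j" and le: "\<bar>u $ i\<bar> \<le> \<bar>v $ i\<bar>"
  shows "pk v \<le> pk u"
proof (cases "\<bar>u $ i\<bar> = \<bar>v $ i\<bar>")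
  case True
  then have "u $ i = v $ i \<or> u $ i = - v $ i" by arith
  then have "u = v \<or> u = negc i v"
  proof
    assume "u $ i = v $ i" then have "u = v" using agree by (metis vec_eq_iff)
    thus ?thesis ..
  next
    assume "u $ i = - v $ i" then have "u = negc i v" using agree by (auto simp: vec_eq_iff negc_def)
    thus ?thesis ..
  qed
  thus ?thesis by (metis order_refl pk_neg)
next
  case False
  show ?thesis
  proof (cases "pk v = 0")
    case True thus ?thesis using pk_nonneg by simp
  next
    case nz: False
    have vi: "v $ i \<noteq> 0" using False le by auto
    then have "v \<noteq> 0" by auto
    with pk_supp[OF nz] obtain j pos where v: "v = axis j (if pos then 1 else -1::int)" by auto
    have "j = i"
    proof (rule ccontr)
      assume "j \<noteq> i" then have "v $ i = 0" using v by (simp add: axis_def)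
      with vi show False by simp
    qed
    have vi1: "\<bar>v $ i\<bar> = 1" using v \<open>j = i\<close> by (auto simp: axis_def)
    have ui: "u $ i = 0" using False le vi1 by arith
    have "\<And>ia. ia \<noteq> i \<Longrightarrow> u $ ia = 0" using agree v \<open>j = i\<close> by (auto simp: axis_def)
    then have "u = 0" using ui by (metis vec_eq_iff zero_index)
    then have "pk u = 1/2" by (simp add: pk_0)
    thus ?thesis using pk_le[OF \<open>v \<noteq> 0\<close>] by linarith
  qed
qed




lemma exp_bind_fin:
  fixes f :: "'b \<Rightarrow> real"
  assumes fM: "finite (set_pmf M)" and fN: "\<And>x. x \<in> set_pmf M \<Longrightarrow> finite (set_pmf (N x))"
  shows "measure_pmf.expectation (bind_pmf M N) f =
         measure_pmf.expectation M (\<lambda>x. measure_pmf.expectation (N x) f)"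
proof -
  define S where "S = (\<Union>x\<in>set_pmf M. set_pmf (N x))"
  have fS: "finite S" using fM fN by (auto simp: S_def)
  have sb: "set_pmf (bind_pmf M N) = S" by (simp add: S_def set_bind_pmf)
  have "measure_pmf.expectation (bind_pmf M N) f = (\<Sum>y\<in>S. f y * pmf (bind_pmf M N) y)"
    by (rule integral_measure_pmf_real) (use fS sb in auto)
  also have "\<dots> = (\<Sum>y\<in>S. f y * (\<Sum>x\<in>set_pmf M. pmf (N x) y * pmf M x))"
    by (intro sum.cong refl arg_cong2[where f="(*)"], subst pmf_bind,
        rule integral_measure_pmf_real) (use fM in auto)
  also have "\<dots> = (\<Sum>x\<in>set_pmf M. (\<Sum>y\<in>S. f y * pmf (N x) y) * pmf M x)"
    by (simp add: sum_distrib_left sum_distrib_right sum.swap[of _ S] mult_ac)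
  also have "\<dots> = (\<Sum>x\<in>set_pmf M. measure_pmf.expectation (N x) f * pmf M x)"
    by (intro sum.cong refl arg_cong2[where f="(*)"], rule sym, rule integral_measure_pmf_real)
       (use fS in \<open>auto simp: S_def\<close>)
  also have "\<dots> = measure_pmf.expectation M (\<lambda>x. measure_pmf.expectation (N x) f)"
    by (rule sym, rule integral_measure_pmf_real) (use fM in auto)
  finally show ?thesis .
qed


definition Box :: "int \<Rightarrow> (int ^ 'd::finite) set" where
  "Box r = {x. \<forall>i. \<bar>x $ i\<bar> \<le> r}"

lemma finite_Box: "finite (Box r :: (int ^ 'd::finite) set)"
proof -
  have "Box r \<subseteq> (\<lambda>f. vec_lambda f) ` (PiE UNIV (\<lambda>_::'d. {-r..r}))"
  proof
    fix x :: "int^'d" assume "x \<in> Box r"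
    then have "(\<lambda>i. x $ i) \<in> PiE UNIV (\<lambda>_. {-r..r})" by (auto simp: Box_def abs_le_iff) (meson minus_le_iff)
    moreover have "x = vec_lambda (\<lambda>i. x $ i)" by simp
    ultimately show "x \<in> (\<lambda>f. vec_lambda f) ` (PiE UNIV (\<lambda>_::'d. {-r..r}))" by blast
  qed
  moreover have "finite (PiE UNIV (\<lambda>_::'d. {-r..r}))" by (intro finite_PiE) auto
  ultimately show ?thesis using finite_subset by blast
qed

lemma Box_add: "v \<in> Box r \<Longrightarrow> w \<in> Box r' \<Longrightarrow> v + w \<in> Box (r + r')"
  unfolding Box_def by (auto intro: order_trans[OF abs_triangle_ineq] add_mono)

lemma Box_mono: "v \<in> Box r \<Longrightarrow> r \<le> r' \<Longrightarrow> v \<in> Box r'"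
  unfolding Box_def by (auto intro: order_trans)

lemma Box_0: "(0::int^'d::finite) \<in> Box r \<longleftrightarrow> 0 \<le> r" unfolding Box_def by auto

lemma step_Box1: "y \<in> set_pmf (lazy_step x) \<Longrightarrow> y - x \<in> Box 1"
proof -
  assume "y \<in> set_pmf (lazy_step x)"
  then have "y - x \<in> set_pmf (lazy_step 0)" using set_lazy_step[of x] by auto
  then have "y - x \<in> insert 0 (range (\<lambda>(i, pos). axis i (if pos then 1 else -1::int)))"
    using set_lazy_step0 by blast
  moreover have "\<forall>v \<in> insert 0 (range (\<lambda>(i, pos). axis i (if pos then 1 else -1::int))). v \<in> Box (1::int)"
    by (auto simp: Box_def axis_def)
  ultimately show ?thesis by blast
qed

lemma pk_Box1: "pk v \<noteq> 0 \<Longrightarrow> v \<in> Box 1"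
  using step_Box1[of v 0] by (simp add: pk_def set_pmf_iff)

lemma exp_lazy_step:
  fixes h :: "int^'d::finite \<Rightarrow> real"
  shows "measure_pmf.expectation (lazy_step x) h = (\<Sum>w\<in>Box 1. pk w * h (x + w))"
proof -
  have "measure_pmf.expectation (lazy_step x) h = (\<Sum>y\<in>(+) x ` Box 1. h y * pmf (lazy_step x) y)"
  proof (rule integral_measure_pmf_real)
    show "finite ((+) x ` Box 1)" by (intro finite_imageI finite_Box)
    fix y assume "y \<in> set_pmf (lazy_step x)"
    then have "y - x \<in> Box 1" by (rule step_Box1)
    thus "y \<in> (+) x ` Box 1" by (metis add_diff_cancel_left' diff_add_cancel image_eqI add.commute)
  qed
  also have "\<dots> = (\<Sum>w\<in>Box 1. pk w * h (x + w))"
    by (subst sum.reindex) (auto simp: inj_def pmf_lazy_step mult.commute)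
  finally show ?thesis .
qed

lemma lazy_walk_set:
  "xs \<in> set_pmf (lazy_walk x0 t) \<Longrightarrow> length xs = Suc t \<and> (\<forall>s\<le>t. xs ! s - x0 \<in> Box (int s))"
proof (induction t arbitrary: xs)
  case 0 thus ?case by (auto simp: Box_def)
next
  case (Suc t)
  then obtain ys y where ys: "ys \<in> set_pmf (lazy_walk x0 t)" and y: "y \<in> set_pmf (lazy_step (last ys))"
    and xs: "xs = ys @ [y]" by (auto simp: set_bind_pmf)
  from Suc.IH[OF ys] have L: "length ys = Suc t" and B: "\<forall>s\<le>t. ys ! s - x0 \<in> Box (int s)" by auto
  have lst: "last ys = ys ! t" using L by (subst last_conv_nth) auto
  have "y - x0 \<in> Box (int (Suc t))"
  proof -
    have "ys ! t - x0 \<in> Box (int t)" using B by auto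
    then have "(y - last ys) + (ys ! t - x0) \<in> Box (1 + int t)"
      by (rule Box_add[OF step_Box1[OF y]])
    thus ?thesis using lst by simp
  qed
  moreover have "\<forall>s\<le>t. xs ! s - x0 \<in> Box (int s)" using B L by (auto simp: xs nth_append)
  ultimately show ?case using L xs by (auto simp: nth_append le_Suc_eq)
qed

lemma finite_lazy_walk: "finite (set_pmf (lazy_walk x0 t))"
  by (induction t) (auto simp: set_bind_pmf finite_set_lazy_step)

lemma exp_walk_Suc:
  fixes F :: "(int^'d::finite) list \<Rightarrow> real"
  shows "measure_pmf.expectation (lazy_walk x0 (Suc t)) F =
    measure_pmf.expectation (lazy_walk x0 t) (\<lambda>xs. \<Sum>w\<in>Box 1. pk w * F (xs @ [last xs + w]))"
  by (simp only: lazy_walk.simps, subst exp_bind_fin)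
     (auto simp: finite_lazy_walk finite_set_lazy_step exp_lazy_step)

lemma exp_return: "measure_pmf.expectation (return_pmf a) (f :: _ \<Rightarrow> real) = f a"
  by (subst integral_measure_pmf_real[where A="{a}"]) auto




fun Vf :: "('a \<Rightarrow> 'a \<Rightarrow> real) \<Rightarrow> 'a set \<Rightarrow> 'a set \<Rightarrow> (nat \<Rightarrow> 'a \<Rightarrow> real) \<Rightarrow> nat \<Rightarrow> 'a \<Rightarrow> real" where
  "Vf K Om A g 0 x = g 0 x * (if x \<in> A then 1 else 0)"
| "Vf K Om A g (Suc s) x = g (Suc s) x * (\<Sum>u\<in>Om. K x u * Vf K Om A g s u)"

lemma sum_pair:
  assumes fin: "finite Om" and cl: "\<And>x. x \<in> Om \<Longrightarrow> \<sigma> x \<in> Om" and inv: "\<And>x. \<sigma> (\<sigma> x) = x"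
    and side: "\<And>x. \<sigma> x \<in> H \<longleftrightarrow> x \<notin> H"
  shows "(\<Sum>x\<in>Om. F x) = (\<Sum>x\<in>Om \<inter> H. F x + F (\<sigma> x))"
proof -
  have img: "Om - H = \<sigma> ` (Om \<inter> H)"
  proof
    show "Om - H \<subseteq> \<sigma> ` (Om \<inter> H)"
    proof
      fix x assume x: "x \<in> Om - H"
      then have "\<sigma> x \<in> Om \<inter> H" using cl side by auto
      moreover have "x = \<sigma> (\<sigma> x)" by (simp add: inv)
      ultimately show "x \<in> \<sigma> ` (Om \<inter> H)" by blast
    qed
    show "\<sigma> ` (Om \<inter> H) \<subseteq> Om - H" using cl side inv by auto
  qed
  have inj: "inj_on \<sigma> (Om \<inter> H)" by (metis inj_onI inv)
  have "(\<Sum>x\<in>Om. F x) = (\<Sum>x\<in>Om \<inter> H. F x) + (\<Sum>x\<in>Om - H. F x)"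
    by (metis fin sum.Int_Diff)
  also have "(\<Sum>x\<in>Om - H. F x) = (\<Sum>x\<in>Om \<inter> H. F (\<sigma> x))"
    unfolding img by (rule sum.reindex[OF inj, unfolded comp_def])
  finally show ?thesis by (simp add: sum.distrib)
qed

lemma comb_step:
  fixes a b \<alpha> \<beta> \<alpha>' \<beta>' :: real
  assumes "b \<le> a" "0 \<le> b" "0 \<le> \<alpha>" "0 \<le> \<beta>" "\<alpha> \<le> \<alpha>'" "\<beta> \<le> \<alpha>'" "\<beta>' \<le> \<alpha>'"
    "\<alpha> + \<beta> \<le> \<alpha>' + \<beta>'" "0 \<le> \<beta>'"
  shows "a * \<alpha> + b * \<beta> \<le> a * \<alpha>' + b * \<beta>'" "b * \<alpha> + a * \<beta> \<le> a * \<alpha>' + b * \<beta>'"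
    "b * \<alpha>' + a * \<beta>' \<le> a * \<alpha>' + b * \<beta>'"
    "(a * \<alpha> + b * \<beta>) + (b * \<alpha> + a * \<beta>) \<le> (a * \<alpha>' + b * \<beta>') + (b * \<alpha>' + a * \<beta>')"
    "0 \<le> a * \<alpha> + b * \<beta>" "0 \<le> b * \<alpha> + a * \<beta>" "0 \<le> b * \<alpha>' + a * \<beta>'"
proof -
  have e1: "a * \<alpha>' + b * \<beta>' - (a * \<alpha> + b * \<beta>) = b * ((\<alpha>' + \<beta>') - (\<alpha> + \<beta>)) + (a - b) * (\<alpha>' - \<alpha>)"
    by (simp add: algebra_simps)
  have e2: "a * \<alpha>' + b * \<beta>' - (b * \<alpha> + a * \<beta>) = b * ((\<alpha>' + \<beta>') - (\<alpha> + \<beta>)) + (a - b) * (\<alpha>' - \<beta>)"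
    by (simp add: algebra_simps)
  have e3: "a * \<alpha>' + b * \<beta>' - (b * \<alpha>' + a * \<beta>') = (a - b) * (\<alpha>' - \<beta>')"
    by (simp add: algebra_simps)
  have e4: "(a * \<alpha>' + b * \<beta>') + (b * \<alpha>' + a * \<beta>') - ((a * \<alpha> + b * \<beta>) + (b * \<alpha> + a * \<beta>))
      = (a + b) * ((\<alpha>' + \<beta>') - (\<alpha> + \<beta>))" by (simp add: algebra_simps)
  have p1: "0 \<le> b * ((\<alpha>' + \<beta>') - (\<alpha> + \<beta>))" using assms by simp
  have p2: "0 \<le> (a - b) * (\<alpha>' - \<alpha>)" using assms by simp
  have p3: "0 \<le> (a - b) * (\<alpha>' - \<beta>)" using assms by simp
  have p4: "0 \<le> (a - b) * (\<alpha>' - \<beta>')" using assms by simp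
  have p5: "0 \<le> (a + b) * ((\<alpha>' + \<beta>') - (\<alpha> + \<beta>))" using assms by simp
  show "a * \<alpha> + b * \<beta> \<le> a * \<alpha>' + b * \<beta>'" using e1 p1 p2 by linarith
  show "b * \<alpha> + a * \<beta> \<le> a * \<alpha>' + b * \<beta>'" using e2 p1 p3 by linarith
  show "b * \<alpha>' + a * \<beta>' \<le> a * \<alpha>' + b * \<beta>'" using e3 p4 by linarith
  show "(a * \<alpha> + b * \<beta>) + (b * \<alpha> + a * \<beta>) \<le> (a * \<alpha>' + b * \<beta>') + (b * \<alpha>' + a * \<beta>')"
    using e4 p5 by linarith
  have "0 \<le> a" using assms by linarith
  then show "0 \<le> a * \<alpha> + b * \<beta>" "0 \<le> b * \<alpha> + a * \<beta>" "0 \<le> b * \<alpha>' + a * \<beta>'"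
    using assms by simp_all
qed

lemma mult_step:
  fixes \<gamma> \<delta> P Q P' Q' :: real
  assumes "0 \<le> \<gamma>" "0 \<le> \<delta>" "0 \<le> P" "0 \<le> Q" "P \<le> P'" "Q \<le> P'" "Q' \<le> P'" "P + Q \<le> P' + Q'" "0 \<le> Q'"
  shows "\<gamma> * P \<le> max \<gamma> \<delta> * P'" "\<delta> * Q \<le> max \<gamma> \<delta> * P'" "min \<gamma> \<delta> * Q' \<le> max \<gamma> \<delta> * P'"
    "\<gamma> * P + \<delta> * Q \<le> max \<gamma> \<delta> * P' + min \<gamma> \<delta> * Q'"
    "0 \<le> \<gamma> * P" "0 \<le> \<delta> * Q" "0 \<le> min \<gamma> \<delta> * Q'"
proof -
  show "\<gamma> * P \<le> max \<gamma> \<delta> * P'" using assms by (intro mult_mono) auto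
  show "\<delta> * Q \<le> max \<gamma> \<delta> * P'" using assms by (intro mult_mono) auto
  show "min \<gamma> \<delta> * Q' \<le> max \<gamma> \<delta> * P'" using assms by (intro mult_mono) auto
  show "0 \<le> \<gamma> * P" "0 \<le> \<delta> * Q" "0 \<le> min \<gamma> \<delta> * Q'" using assms by auto
  show "\<gamma> * P + \<delta> * Q \<le> max \<gamma> \<delta> * P' + min \<gamma> \<delta> * Q'"
  proof (cases "\<delta> \<le> \<gamma>")
    case True
    have e: "\<gamma> * P' + \<delta> * Q' - (\<gamma> * P + \<delta> * Q) = \<delta> * ((P' + Q') - (P + Q)) + (\<gamma> - \<delta>) * (P' - P)"
      by (simp add: algebra_simps)
    have h: "0 \<le> \<delta> * ((P' + Q') - (P + Q))" "0 \<le> (\<gamma> - \<delta>) * (P' - P)" using assms True by simp_all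
    have mx: "max \<gamma> \<delta> = \<gamma>" and mn: "min \<gamma> \<delta> = \<delta>" using True by auto
    show ?thesis unfolding mx mn using e h by linarith
  next
    case False
    have e: "\<delta> * P' + \<gamma> * Q' - (\<gamma> * P + \<delta> * Q) = \<gamma> * ((P' + Q') - (P + Q)) + (\<delta> - \<gamma>) * (P' - Q)"
      by (simp add: algebra_simps)
    have h: "0 \<le> \<gamma> * ((P' + Q') - (P + Q))" "0 \<le> (\<delta> - \<gamma>) * (P' - Q)" using assms False by simp_all
    have mx: "max \<gamma> \<delta> = \<delta>" and mn: "min \<gamma> \<delta> = \<gamma>" using False by auto
    show ?thesis unfolding mx mn using e h by linarith
  qed
qed

definition maj :: "('a \<Rightarrow> 'a) \<Rightarrow> 'a set \<Rightarrow> ('a \<Rightarrow> real) \<Rightarrow> ('a \<Rightarrow> real) \<Rightarrow> bool" where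
  "maj \<sigma> H v v' \<longleftrightarrow> (\<forall>x\<in>H. 0 \<le> v x \<and> 0 \<le> v (\<sigma> x) \<and> v x \<le> v' x \<and> v (\<sigma> x) \<le> v' x \<and>
      v' (\<sigma> x) \<le> v' x \<and> v x + v (\<sigma> x) \<le> v' x + v' (\<sigma> x) \<and> 0 \<le> v' (\<sigma> x))"

lemma polar:
  assumes fin: "finite Om" and cl: "\<And>x. x \<in> Om \<Longrightarrow> \<sigma> x \<in> Om" and inv: "\<And>x. \<sigma> (\<sigma> x) = x"
    and side: "\<And>x. \<sigma> x \<in> H \<longleftrightarrow> x \<notin> H"
    and Acl: "\<And>x. \<sigma> x \<in> A \<longleftrightarrow> x \<in> A"
    and Kab: "\<And>x u. x \<in> H \<Longrightarrow> u \<in> H \<Longrightarrow> K x (\<sigma> u) \<le> K x u"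
    and Knn: "\<And>x u. 0 \<le> K x u"
    and K1: "\<And>x u. x \<in> H \<Longrightarrow> u \<in> H \<Longrightarrow> K (\<sigma> x) (\<sigma> u) = K x u"
    and K2: "\<And>x u. x \<in> H \<Longrightarrow> u \<in> H \<Longrightarrow> K (\<sigma> x) u = K x (\<sigma> u)"
    and gnn: "\<And>s x. 0 \<le> g s x"
    and g1: "\<And>s x. x \<in> H \<Longrightarrow> g' s x = max (g s x) (g s (\<sigma> x))"
    and g2: "\<And>s x. x \<in> H \<Longrightarrow> g' s (\<sigma> x) = min (g s x) (g s (\<sigma> x))"
  shows "maj \<sigma> H (Vf K Om A g s) (Vf K Om A g' s)"
proof (induction s)
  case 0
  show ?case unfolding maj_def
  proof
    fix x assume x: "x \<in> H"
    show "0 \<le> Vf K Om A g 0 x \<and> 0 \<le> Vf K Om A g 0 (\<sigma> x) \<and> Vf K Om A g 0 x \<le> Vf K Om A g' 0 x \<and>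
      Vf K Om A g 0 (\<sigma> x) \<le> Vf K Om A g' 0 x \<and> Vf K Om A g' 0 (\<sigma> x) \<le> Vf K Om A g' 0 x \<and>
      Vf K Om A g 0 x + Vf K Om A g 0 (\<sigma> x) \<le> Vf K Om A g' 0 x + Vf K Om A g' 0 (\<sigma> x) \<and>
      0 \<le> Vf K Om A g' 0 (\<sigma> x)"
      using gnn[of 0 x] gnn[of 0 "\<sigma> x"] g1[OF x, of 0] g2[OF x, of 0] Acl[of x]
      by (auto simp: max_def min_def)
  qed
next
  case (Suc s)
  let ?V = "Vf K Om A g s" and ?V' = "Vf K Om A g' s"
  have sp: "\<And>F. (\<Sum>x\<in>Om. F x) = (\<Sum>x\<in>Om \<inter> H. F x + F (\<sigma> x))"
    by (rule sum_pair[OF fin cl inv side])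
  show ?case unfolding maj_def
  proof
    fix x assume x: "x \<in> H"
    define P where "P = (\<Sum>u\<in>Om. K x u * ?V u)"
    define Q where "Q = (\<Sum>u\<in>Om. K (\<sigma> x) u * ?V u)"
    define P' where "P' = (\<Sum>u\<in>Om. K x u * ?V' u)"
    define Q' where "Q' = (\<Sum>u\<in>Om. K (\<sigma> x) u * ?V' u)"
    have P: "P = (\<Sum>u\<in>Om \<inter> H. K x u * ?V u + K x (\<sigma> u) * ?V (\<sigma> u))" unfolding P_def by (rule sp)
    have P': "P' = (\<Sum>u\<in>Om \<inter> H. K x u * ?V' u + K x (\<sigma> u) * ?V' (\<sigma> u))" unfolding P'_def by (rule sp)
    have Q: "Q = (\<Sum>u\<in>Om \<inter> H. K x (\<sigma> u) * ?V u + K x u * ?V (\<sigma> u))" unfolding Q_def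
      by (subst sp) (intro sum.cong refl, use x K1 K2 in auto)
    have Q': "Q' = (\<Sum>u\<in>Om \<inter> H. K x (\<sigma> u) * ?V' u + K x u * ?V' (\<sigma> u))" unfolding Q'_def
      by (subst sp) (intro sum.cong refl, use x K1 K2 in auto)
    have T: "\<And>u. u \<in> Om \<inter> H \<Longrightarrow>
       (K x u * ?V u + K x (\<sigma> u) * ?V (\<sigma> u)) \<le> (K x u * ?V' u + K x (\<sigma> u) * ?V' (\<sigma> u)) \<and>
       (K x (\<sigma> u) * ?V u + K x u * ?V (\<sigma> u)) \<le> (K x u * ?V' u + K x (\<sigma> u) * ?V' (\<sigma> u)) \<and>
       (K x (\<sigma> u) * ?V' u + K x u * ?V' (\<sigma> u)) \<le> (K x u * ?V' u + K x (\<sigma> u) * ?V' (\<sigma> u)) \<and>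
       (K x u * ?V u + K x (\<sigma> u) * ?V (\<sigma> u)) + (K x (\<sigma> u) * ?V u + K x u * ?V (\<sigma> u)) \<le>
       (K x u * ?V' u + K x (\<sigma> u) * ?V' (\<sigma> u)) + (K x (\<sigma> u) * ?V' u + K x u * ?V' (\<sigma> u)) \<and>
       0 \<le> (K x u * ?V u + K x (\<sigma> u) * ?V (\<sigma> u)) \<and>
       0 \<le> (K x (\<sigma> u) * ?V u + K x u * ?V (\<sigma> u)) \<and>
       0 \<le> (K x (\<sigma> u) * ?V' u + K x u * ?V' (\<sigma> u))"
    proof -
      fix u assume u: "u \<in> Om \<inter> H"
      from Suc.IH u have m: "0 \<le> ?V u" "0 \<le> ?V (\<sigma> u)" "?V u \<le> ?V' u" "?V (\<sigma> u) \<le> ?V' u"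
        "?V' (\<sigma> u) \<le> ?V' u" "?V u + ?V (\<sigma> u) \<le> ?V' u + ?V' (\<sigma> u)" "0 \<le> ?V' (\<sigma> u)"
        unfolding maj_def by auto
      note c = comb_step[OF Kab[OF x] Knn m, of u]
      show "?thesis u" using c u by auto
    qed
    have PP: "P \<le> P'" "Q \<le> P'" "Q' \<le> P'" "P + Q \<le> P' + Q'" "0 \<le> P" "0 \<le> Q" "0 \<le> Q'"
      unfolding P P' Q Q' using T
      by (auto intro!: sum_mono sum_nonneg simp: sum.distrib[symmetric])
    note ms = mult_step[OF gnn[of "Suc s" x] gnn[of "Suc s" "\<sigma> x"] PP(5,6,1,2,3,4,7)]
    have e1: "Vf K Om A g (Suc s) x = g (Suc s) x * P" by (simp add: P_def)
    have e2: "Vf K Om A g (Suc s) (\<sigma> x) = g (Suc s) (\<sigma> x) * Q" by (simp add: Q_def)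
    have e3: "Vf K Om A g' (Suc s) x = max (g (Suc s) x) (g (Suc s) (\<sigma> x)) * P'" by (simp add: P'_def g1[OF x])
    have e4: "Vf K Om A g' (Suc s) (\<sigma> x) = min (g (Suc s) x) (g (Suc s) (\<sigma> x)) * Q'" by (simp add: Q'_def g2[OF x])
    show "0 \<le> Vf K Om A g (Suc s) x \<and> 0 \<le> Vf K Om A g (Suc s) (\<sigma> x) \<and> Vf K Om A g (Suc s) x \<le> Vf K Om A g' (Suc s) x \<and>
      Vf K Om A g (Suc s) (\<sigma> x) \<le> Vf K Om A g' (Suc s) x \<and> Vf K Om A g' (Suc s) (\<sigma> x) \<le> Vf K Om A g' (Suc s) x \<and>
      Vf K Om A g (Suc s) x + Vf K Om A g (Suc s) (\<sigma> x) \<le> Vf K Om A g' (Suc s) x + Vf K Om A g' (Suc s) (\<sigma> x) \<and>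
      0 \<le> Vf K Om A g' (Suc s) (\<sigma> x)"
      unfolding e1 e2 e3 e4 using ms by auto
  qed
qed

lemma polar_sum:
  assumes fin: "finite Om" and cl: "\<And>x. x \<in> Om \<Longrightarrow> \<sigma> x \<in> Om" and inv: "\<And>x. \<sigma> (\<sigma> x) = x"
    and side: "\<And>x. \<sigma> x \<in> H \<longleftrightarrow> x \<notin> H"
    and m: "maj \<sigma> H v v'"
  shows "(\<Sum>x\<in>Om. v x) \<le> (\<Sum>x\<in>Om. v' x)"
proof -
  have "(\<Sum>x\<in>Om. v x) = (\<Sum>x\<in>Om \<inter> H. v x + v (\<sigma> x))" by (rule sum_pair[OF fin cl inv side])
  also have "\<dots> \<le> (\<Sum>x\<in>Om \<inter> H. v' x + v' (\<sigma> x))"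
    by (rule sum_mono) (use m in \<open>auto simp: maj_def\<close>)
  also have "\<dots> = (\<Sum>x\<in>Om. v' x)" by (rule sum_pair[OF fin cl inv side, symmetric])
  finally show ?thesis .
qed




abbreviation KK :: "int^'d::finite \<Rightarrow> int^'d \<Rightarrow> real" where "KK \<equiv> (\<lambda>x u. pk (x - u))"

lemma V_supp: "Vf KK Om A g s x \<noteq> 0 \<Longrightarrow> \<exists>a\<in>A. x - a \<in> Box (int s)"
proof (induction s arbitrary: x)
  case 0 thus ?case by (auto split: if_splits simp: Box_def)
next
  case (Suc s)
  then have "(\<Sum>u\<in>Om. pk (x - u) * Vf KK Om A g s u) \<noteq> 0" by auto
  then obtain u where "u \<in> Om" and nz: "pk (x - u) * Vf KK Om A g s u \<noteq> 0"
    by (meson sum.not_neutral_contains_not_neutral)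
  then have "x - u \<in> Box 1" "Vf KK Om A g s u \<noteq> 0" using pk_Box1 by auto
  with Suc.IH obtain a where "a \<in> A" "u - a \<in> Box (int s)" by blast
  with Box_add[OF \<open>x - u \<in> Box 1\<close> this(2)] have "x - a \<in> Box (1 + int s)" by simp
  thus ?case using \<open>a \<in> A\<close> by auto
qed

lemma kernel_sum:
  fixes h :: "int^'d::finite \<Rightarrow> real"
  assumes fO: "finite Om" and sub: "\<And>w. w \<in> Box 1 \<Longrightarrow> u + w \<in> Om"
  shows "(\<Sum>x\<in>Om. pk (x - u) * h x) = (\<Sum>w\<in>Box 1. pk w * h (u + w))"
proof -
  have "(\<Sum>w\<in>Box 1. pk w * h (u + w)) = (\<Sum>x\<in>(+) u ` Box 1. pk (x - u) * h x)"
    by (subst sum.reindex) (auto simp: inj_def)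
  also have "\<dots> = (\<Sum>x\<in>Om. pk (x - u) * h x)"
  proof (rule sum.mono_neutral_left[OF fO])
    show "(+) u ` Box 1 \<subseteq> Om" using sub by auto
    show "\<forall>x\<in>Om - (+) u ` Box 1. pk (x - u) * h x = 0"
    proof
      fix x assume x: "x \<in> Om - (+) u ` Box 1"
      have "pk (x - u) = 0"
      proof (rule ccontr)
        assume "pk (x - u) \<noteq> 0"
        then have "x - u \<in> Box 1" by (rule pk_Box1)
        then have "x \<in> (+) u ` Box 1" by (metis add.commute diff_add_cancel image_eqI)
        thus False using x by auto
      qed
      thus "pk (x - u) * h x = 0" by simp
    qed
  qed
  finally show ?thesis by simp
qed

lemma walk_sum:
  fixes x0 :: "int^'d::finite" and g :: "nat \<Rightarrow> int^'d \<Rightarrow> real" and \<phi> :: "int^'d \<Rightarrow> real"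
  assumes fA: "finite A" and fO: "finite Om"
    and cl: "\<And>a x. a \<in> A \<Longrightarrow> x - a \<in> Box (int t) \<Longrightarrow> x \<in> Om"
  shows "(\<Sum>a\<in>A. measure_pmf.expectation (lazy_walk x0 t)
            (\<lambda>X. (\<Prod>s\<in>{0..t}. g s (X ! s - x0 + a)) * \<phi> (X ! t - x0 + a)))
       = (\<Sum>x\<in>Om. Vf KK Om A g t x * \<phi> x)"
  using cl
proof (induction t arbitrary: \<phi>)
  case 0
  have AO: "A \<subseteq> Om" using "0.prems"[of _ _] by (force simp: Box_def)
  have "(\<Sum>x\<in>Om. Vf KK Om A g 0 x * \<phi> x) = (\<Sum>x\<in>Om. if x \<in> A then g 0 x * \<phi> x else 0)"
    by (intro sum.cong) auto
  also have "\<dots> = (\<Sum>x\<in>Om \<inter> A. g 0 x * \<phi> x)" by (rule sum.inter_restrict[OF fO, symmetric])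
  also have "Om \<inter> A = A" using AO by auto
  finally show ?case by (simp add: exp_return)
next
  case (Suc t)
  define \<psi> where "\<psi> u = (\<Sum>w\<in>Box 1. pk w * (g (Suc t) (u + w) * \<phi> (u + w)))" for u
  have step: "measure_pmf.expectation (lazy_walk x0 (Suc t))
            (\<lambda>X. (\<Prod>s\<in>{0..Suc t}. g s (X ! s - x0 + a)) * \<phi> (X ! Suc t - x0 + a))
     = measure_pmf.expectation (lazy_walk x0 t)
            (\<lambda>X. (\<Prod>s\<in>{0..t}. g s (X ! s - x0 + a)) * \<psi> (X ! t - x0 + a))" for a
    unfolding exp_walk_Suc
  proof (intro integral_cong_AE)
    show "AE xs in measure_pmf (lazy_walk x0 t).
       (\<Sum>w\<in>Box 1. pk w * ((\<Prod>s\<in>{0..Suc t}. g s ((xs @ [last xs + w]) ! s - x0 + a)) *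
             \<phi> ((xs @ [last xs + w]) ! Suc t - x0 + a))) =
       (\<Prod>s\<in>{0..t}. g s (xs ! s - x0 + a)) * \<psi> (xs ! t - x0 + a)"
    proof (unfold AE_measure_pmf_iff, intro ballI)
      fix xs assume "xs \<in> set_pmf (lazy_walk x0 t)"
      then have L: "length xs = Suc t" using lazy_walk_set by blast
      have lst: "last xs = xs ! t" using L by (subst last_conv_nth) auto
      have pr: "(\<Prod>s\<in>{0..Suc t}. g s ((xs @ [y]) ! s - x0 + a)) =
            (\<Prod>s\<in>{0..t}. g s (xs ! s - x0 + a)) * g (Suc t) (y - x0 + a)" for y
      proof -
        have "(\<Prod>s\<in>{0..Suc t}. g s ((xs @ [y]) ! s - x0 + a)) =
            (\<Prod>s\<in>{0..t}. g s ((xs @ [y]) ! s - x0 + a)) * g (Suc t) ((xs @ [y]) ! Suc t - x0 + a)"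
          by (simp add: prod.atLeast0_atMost_Suc)
        also have "(\<Prod>s\<in>{0..t}. g s ((xs @ [y]) ! s - x0 + a)) = (\<Prod>s\<in>{0..t}. g s (xs ! s - x0 + a))"
          by (intro prod.cong refl) (simp add: nth_append L)
        finally show ?thesis using L by (simp add: nth_append)
      qed
      have ex: "xs ! t + w - x0 + a = (xs ! t - x0 + a) + w" for w by (simp add: algebra_simps)
      show "(\<Sum>w\<in>Box 1. pk w * ((\<Prod>s\<in>{0..Suc t}. g s ((xs @ [last xs + w]) ! s - x0 + a)) *
             \<phi> ((xs @ [last xs + w]) ! Suc t - x0 + a))) =
       (\<Prod>s\<in>{0..t}. g s (xs ! s - x0 + a)) * \<psi> (xs ! t - x0 + a)"
        unfolding pr \<psi>_def sum_distrib_left using L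
        by (intro sum.cong refl) (simp add: nth_append lst ex mult_ac)
    qed
  qed simp_all
  have "(\<Sum>a\<in>A. measure_pmf.expectation (lazy_walk x0 (Suc t))
            (\<lambda>X. (\<Prod>s\<in>{0..Suc t}. g s (X ! s - x0 + a)) * \<phi> (X ! Suc t - x0 + a)))
      = (\<Sum>a\<in>A. measure_pmf.expectation (lazy_walk x0 t)
            (\<lambda>X. (\<Prod>s\<in>{0..t}. g s (X ! s - x0 + a)) * \<psi> (X ! t - x0 + a)))"
    by (rule sum.cong[OF refl], rule step)
  also have "\<dots> = (\<Sum>u\<in>Om. Vf KK Om A g t u * \<psi> u)"
  proof (rule Suc.IH)
    fix a x assume "a \<in> A" "x - a \<in> Box (int t)"
    thus "x \<in> Om" using Suc.prems Box_mono by force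
  qed
  also have "\<dots> = (\<Sum>u\<in>Om. Vf KK Om A g t u * (\<Sum>x\<in>Om. pk (x - u) * (g (Suc t) x * \<phi> x)))"
  proof (intro sum.cong refl)
    fix u assume "u \<in> Om"
    show "Vf KK Om A g t u * \<psi> u = Vf KK Om A g t u * (\<Sum>x\<in>Om. pk (x - u) * (g (Suc t) x * \<phi> x))"
    proof (cases "Vf KK Om A g t u = 0")
      case False
      then obtain a where a: "a \<in> A" "u - a \<in> Box (int t)" using V_supp by blast
      have "(\<Sum>x\<in>Om. pk (x - u) * (g (Suc t) x * \<phi> x)) = \<psi> u"
        unfolding \<psi>_def
      proof (rule kernel_sum[OF fO])
        fix w :: "int^'d" assume "w \<in> Box 1"
        from Box_add[OF a(2) this] have "(u - a) + w \<in> Box (int (Suc t))" by (simp add: add.commute)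
        then have "(u + w) - a \<in> Box (int (Suc t))" by (simp add: algebra_simps)
        thus "u + w \<in> Om" using Suc.prems a(1) by blast
      qed
      thus ?thesis by simp
    qed simp
  qed
  also have "\<dots> = (\<Sum>u\<in>Om. \<Sum>x\<in>Om. Vf KK Om A g t u * (pk (x - u) * (g (Suc t) x * \<phi> x)))"
    by (simp only: sum_distrib_left)
  also have "\<dots> = (\<Sum>x\<in>Om. \<Sum>u\<in>Om. Vf KK Om A g t u * (pk (x - u) * (g (Suc t) x * \<phi> x)))"
    by (rule sum.swap)
  also have "\<dots> = (\<Sum>x\<in>Om. Vf KK Om A g (Suc t) x * \<phi> x)"
  proof (intro sum.cong refl)
    fix x
    show "(\<Sum>u\<in>Om. Vf KK Om A g t u * (pk (x - u) * (g (Suc t) x * \<phi> x))) = Vf KK Om A g (Suc t) x * \<phi> x"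
      unfolding Vf.simps sum_distrib_left sum_distrib_right by (intro sum.cong refl) (simp only: mult_ac)
  qed
  finally show ?case .
qed




definition gc :: "nat \<Rightarrow> (nat \<Rightarrow> int^'d::finite) \<Rightarrow> nat \<Rightarrow> int^'d \<Rightarrow> real" where
  "gc n c s y = (if y + c s \<in> box_Q n then 0 else 1)"

definition mu :: "nat \<Rightarrow> (nat \<Rightarrow> int^'d::finite) \<Rightarrow> int" where
  "mu t c = (\<Sum>s\<in>{0..t}. \<Sum>i\<in>UNIV. \<bar>c s $ i\<bar>)"

definition Dv :: "int^'d::finite \<Rightarrow> nat \<Rightarrow> nat \<Rightarrow> (nat \<Rightarrow> int^'d) \<Rightarrow> real" where
  "Dv x0 t n c = measure_pmf.expectation (lazy_walk x0 t)
           (\<lambda>X. vol (\<Union>s\<in>{0..t}. (\<lambda>q. X ! s + c s + q) ` box_Q n))"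

lemma mem_box_Q: "x \<in> box_Q n \<longleftrightarrow> x \<in> Box (int n)"
  by (simp add: box_Q_def Box_def)

lemma Box_uminus: "- x \<in> Box r \<longleftrightarrow> x \<in> Box r" by (simp add: Box_def)

lemma c_le_mu: "s \<le> t \<Longrightarrow> c s \<in> Box (mu t c)"
proof -
  assume st: "s \<le> t"
  have "\<bar>c s $ i\<bar> \<le> mu t c" for i
  proof -
    have "\<bar>c s $ i\<bar> \<le> (\<Sum>j\<in>UNIV. \<bar>c s $ j\<bar>)" by (rule member_le_sum) auto
    also have "\<dots> \<le> mu t c" unfolding mu_def using st by (intro member_le_sum) (auto intro: sum_nonneg)
    finally show ?thesis .
  qed
  thus ?thesis by (simp add: Box_def)
qed

lemma prod_ind: "finite S \<Longrightarrow> (\<Prod>s\<in>S. (if B s then 0 else 1::real)) = (if \<exists>s\<in>S. B s then 0 else 1)"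
proof -
  assume fS: "finite S"
  show ?thesis
  proof (cases "\<exists>s\<in>S. B s")
    case True thus ?thesis using fS by (simp add: prod_zero_iff)
  next
    case False thus ?thesis by (simp add: prod.neutral)
  qed
qed

lemma card_repr:
  fixes X :: "(int^'d::finite) list"
  assumes fA: "finite A" and BA: "Box (int t + int n + mu t c) \<subseteq> A"
    and XB: "\<And>s. s \<le> t \<Longrightarrow> X ! s - x0 \<in> Box (int s)"
  shows "vol (\<Union>s\<in>{0..t}. (\<lambda>q. X ! s + c s + q) ` box_Q n)
       = (\<Sum>a\<in>A. 1 - (\<Prod>s\<in>{0..t}. gc n c s (X ! s - x0 + a)))"
proof -
  let ?U = "\<Union>s\<in>{0..t}. (\<lambda>q. X ! s + c s + q) ` box_Q n"
  let ?P = "\<lambda>a. \<exists>s\<in>{0..t}. X ! s - x0 + a + c s \<in> box_Q n"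
  have img: "(\<lambda>z. x0 - z) ` ?U = {a\<in>A. ?P a}"
  proof
    show "(\<lambda>z. x0 - z) ` ?U \<subseteq> {a\<in>A. ?P a}"
    proof
      fix a assume "a \<in> (\<lambda>z. x0 - z) ` ?U"
      then obtain s q where s: "s \<in> {0..t}" and q: "q \<in> box_Q n" and a: "a = x0 - (X ! s + c s + q)"
        by auto
      have "X ! s - x0 + a + c s = - q" by (simp add: a algebra_simps)
      then have "X ! s - x0 + a + c s \<in> box_Q n" using q by (simp add: mem_box_Q Box_uminus)
      then have P: "?P a" using s by blast
      have "(X ! s - x0) + c s + q \<in> Box (int s + mu t c + int n)"
        using XB[of s] s c_le_mu[of s t c] q by (auto intro!: Box_add simp: mem_box_Q)
      then have "(X ! s - x0) + c s + q \<in> Box (int t + int n + mu t c)"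
        by (rule Box_mono) (use s in auto)
      then have "a \<in> Box (int t + int n + mu t c)"
        by (subst Box_uminus[symmetric]) (simp add: a algebra_simps)
      thus "a \<in> {a\<in>A. ?P a}" using BA P by auto
    qed
    show "{a\<in>A. ?P a} \<subseteq> (\<lambda>z. x0 - z) ` ?U"
    proof
      fix a assume "a \<in> {a\<in>A. ?P a}"
      then obtain s where s: "s \<in> {0..t}" and m: "X ! s - x0 + a + c s \<in> box_Q n" by auto
      define q where "q = - (X ! s - x0 + a + c s)"
      have q: "q \<in> box_Q n" using m unfolding q_def mem_box_Q by (simp only: Box_uminus)
      have "x0 - a = X ! s + c s + q" by (simp add: q_def algebra_simps)
      then have "x0 - a \<in> ?U" using s q by blast
      moreover have "a = x0 - (x0 - a)" by simp
      ultimately show "a \<in> (\<lambda>z. x0 - z) ` ?U" by blast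
    qed
  qed
  have "vol ?U = real (card ((\<lambda>z. x0 - z) ` ?U))"
    by (simp add: vol_def card_image inj_on_def)
  also have "\<dots> = real (card {a\<in>A. ?P a})" by (simp add: img)
  also have "\<dots> = (\<Sum>a\<in>A. if ?P a then 1 else 0)"
  proof -
    have "{a\<in>A. ?P a} = A \<inter> {a. ?P a}" by auto
    thus ?thesis using fA by (simp add: sum.If_cases)
  qed
  also have "\<dots> = (\<Sum>a\<in>A. 1 - (\<Prod>s\<in>{0..t}. gc n c s (X ! s - x0 + a)))"
    unfolding gc_def by (intro sum.cong refl) (simp add: prod_ind)
  finally show ?thesis .
qed

lemma Dv_repr:
  fixes x0 :: "int^'d::finite"
  assumes fA: "finite A" and fO: "finite Om" and BA: "Box (int t + int n + mu t c) \<subseteq> A"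
    and cl: "\<And>a x. a \<in> A \<Longrightarrow> x - a \<in> Box (int t) \<Longrightarrow> x \<in> Om"
  shows "Dv x0 t n c = real (card A) - (\<Sum>x\<in>Om. Vf KK Om A (gc n c) t x)"
proof -
  have int: "integrable (measure_pmf (lazy_walk x0 t)) f" for f :: "_ \<Rightarrow> real"
    by (rule integrable_measure_pmf_finite[OF finite_lazy_walk])
  have "Dv x0 t n c = measure_pmf.expectation (lazy_walk x0 t)
       (\<lambda>X. \<Sum>a\<in>A. 1 - (\<Prod>s\<in>{0..t}. gc n c s (X ! s - x0 + a)))"
    unfolding Dv_def
  proof (intro integral_cong_AE)
    show "AE X in measure_pmf (lazy_walk x0 t). vol (\<Union>s\<in>{0..t}. (\<lambda>q. X ! s + c s + q) ` box_Q n)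
       = (\<Sum>a\<in>A. 1 - (\<Prod>s\<in>{0..t}. gc n c s (X ! s - x0 + a)))"
      unfolding AE_measure_pmf_iff
      using card_repr[OF fA BA] lazy_walk_set by blast
  qed simp_all
  also have "\<dots> = (\<Sum>a\<in>A. measure_pmf.expectation (lazy_walk x0 t)
       (\<lambda>X. 1 - (\<Prod>s\<in>{0..t}. gc n c s (X ! s - x0 + a))))"
    by (rule Bochner_Integration.integral_sum) (rule int)
  also have "\<dots> = (\<Sum>a\<in>A. 1 - measure_pmf.expectation (lazy_walk x0 t)
       (\<lambda>X. (\<Prod>s\<in>{0..t}. gc n c s (X ! s - x0 + a)) * (\<lambda>_. 1) (X ! t - x0 + a)))"
    by (intro sum.cong refl) (simp add: Bochner_Integration.integral_diff[OF int int])
  also have "\<dots> = real (card A) - (\<Sum>x\<in>Om. Vf KK Om A (gc n c) t x * (\<lambda>_. 1) x)"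
  proof -
    have ws: "(\<Sum>a\<in>A. measure_pmf.expectation (lazy_walk x0 t)
       (\<lambda>X. (\<Prod>s\<in>{0..t}. gc n c s (X ! s - x0 + a)) * (\<lambda>_. 1) (X ! t - x0 + a)))
      = (\<Sum>x\<in>Om. Vf KK Om A (gc n c) t x * (\<lambda>_. 1) x)" by (rule walk_sum[OF fA fO cl])
    show ?thesis unfolding sum_subtractf ws by simp
  qed
  finally show ?thesis by simp
qed




definition rfl :: "'d::finite \<Rightarrow> int \<Rightarrow> int^'d \<Rightarrow> int^'d" where
  "rfl i k x = (\<chi> j. if j = i then k - x $ j else x $ j)"

definition Hs :: "'d::finite \<Rightarrow> int \<Rightarrow> bool \<Rightarrow> (int^'d) set" where
  "Hs i k sg = {x. if sg then k < 2 * x $ i else 2 * x $ i < k}"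

definition cstep :: "'d::finite \<Rightarrow> int \<Rightarrow> bool \<Rightarrow> (nat \<Rightarrow> int^'d) \<Rightarrow> nat \<Rightarrow> int^'d" where
  "cstep i k sg c = (\<lambda>s. if - (c s) \<in> Hs i k sg then - (rfl i k (- (c s))) else c s)"

lemma rfl_rfl[simp]: "rfl i k (rfl i k x) = x"
  by (simp add: rfl_def vec_eq_iff)

lemma odd_ne: "odd (k::int) \<Longrightarrow> 2 * y \<noteq> k" by auto

lemma rfl_side: "odd k \<Longrightarrow> rfl i k x \<in> Hs i k sg \<longleftrightarrow> x \<notin> Hs i k sg"
  using odd_ne[of k "x $ i"] by (auto simp: rfl_def Hs_def)

lemma rfl_minus: "rfl i k x - rfl i k u = negc i (x - u)"
  by (simp add: rfl_def negc_def vec_eq_iff)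

lemma rfl_minus2: "rfl i k x - u = negc i (x - rfl i k u)"
  by (simp add: rfl_def negc_def vec_eq_iff)

lemma Box_negc: "negc i v \<in> Box r \<longleftrightarrow> v \<in> Box r"
  by (auto simp: negc_def Box_def)

lemma Box_mono1:
  assumes agree: "\<And>j. j \<noteq> i \<Longrightarrow> u $ j = v $ j" and le: "\<bar>u $ i\<bar> \<le> \<bar>v $ i\<bar>" and v: "v \<in> Box r"
  shows "u \<in> Box r"
proof (unfold Box_def, intro CollectI allI)
  fix j show "\<bar>u $ j\<bar> \<le> r"
  proof -
    have "\<bar>v $ j\<bar> \<le> r" "\<bar>v $ i\<bar> \<le> r" using v by (auto simp: Box_def)
    thus ?thesis using le agree[of j] by (cases "j = i") auto
  qed
qed

lemma K_ab:
  assumes "x \<in> Hs i k sg" "u \<in> Hs i k sg"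
  shows "pk (x - rfl i k u) \<le> pk (x - u)"
proof (rule pk_mono[of i])
  show "\<And>j. j \<noteq> i \<Longrightarrow> (x - u) $ j = (x - rfl i k u) $ j" by (simp add: rfl_def)
  show "\<bar>(x - u) $ i\<bar> \<le> \<bar>(x - rfl i k u) $ i\<bar>"
    using assms by (cases sg) (auto simp: rfl_def Hs_def)
qed

lemma trap:
  assumes odd: "odd k" and x: "x \<in> Hs i k sg"
  shows "gc n (cstep i k sg c) s x = max (gc n c s x) (gc n c s (rfl i k x)) \<and>
    gc n (cstep i k sg c) s (rfl i k x) = min (gc n c s x) (gc n c s (rfl i k x))"
proof -
  let ?Q = "box_Q n :: (int^'d) set"
  show "gc n (cstep i k sg c) s x = max (gc n c s x) (gc n c s (rfl i k x)) \<and>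
    gc n (cstep i k sg c) s (rfl i k x) = min (gc n c s x) (gc n c s (rfl i k x))"
  proof (cases "- (c s) \<in> Hs i k sg")
    case False
    have cs: "cstep i k sg c s = c s" using False by (simp add: cstep_def)
    have imp: "x + c s \<in> ?Q \<Longrightarrow> rfl i k x + c s \<in> ?Q"
      unfolding mem_box_Q
    proof (rule Box_mono1[of i])
      show "\<And>j. j \<noteq> i \<Longrightarrow> (rfl i k x + c s) $ j = (x + c s) $ j" by (simp add: rfl_def)
      show "\<bar>(rfl i k x + c s) $ i\<bar> \<le> \<bar>(x + c s) $ i\<bar>"
        using x False by (cases sg) (auto simp: rfl_def Hs_def)
    qed
    show ?thesis unfolding gc_def cs using imp by auto
  next
    case True
    have cs: "cstep i k sg c s = - rfl i k (- c s)" using True by (simp add: cstep_def)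
    have e1: "x + - rfl i k (- c s) \<in> ?Q \<longleftrightarrow> rfl i k x + c s \<in> ?Q"
    proof -
      have "rfl i k x + c s = negc i (x + - rfl i k (- c s))"
        using rfl_minus2[of i k x "- c s"] by simp
      thus ?thesis by (simp add: mem_box_Q Box_negc)
    qed
    have e2: "rfl i k x + - rfl i k (- c s) \<in> ?Q \<longleftrightarrow> x + c s \<in> ?Q"
    proof -
      have "rfl i k x + - rfl i k (- c s) = negc i (x + c s)"
        using rfl_minus[of i k x "- c s"] by simp
      thus ?thesis by (simp add: mem_box_Q Box_negc)
    qed
    have imp: "rfl i k x + c s \<in> ?Q \<Longrightarrow> x + c s \<in> ?Q"
      unfolding mem_box_Q
    proof (rule Box_mono1[of i])
      show "\<And>j. j \<noteq> i \<Longrightarrow> (x + c s) $ j = (rfl i k x + c s) $ j" by (simp add: rfl_def)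
      show "\<bar>(x + c s) $ i\<bar> \<le> \<bar>(rfl i k x + c s) $ i\<bar>"
        using x True by (cases sg) (auto simp: rfl_def Hs_def)
    qed
    show ?thesis unfolding gc_def cs e1 e2 using imp by auto
  qed
qed

lemma Vsum_step:
  fixes Om A :: "(int^'d::finite) set"
  assumes odd: "odd k" and fO: "finite Om" and clO: "\<And>x. x \<in> Om \<Longrightarrow> rfl i k x \<in> Om"
    and clA: "\<And>x. rfl i k x \<in> A \<longleftrightarrow> x \<in> A"
  shows "(\<Sum>x\<in>Om. Vf KK Om A (gc n c) t x) \<le> (\<Sum>x\<in>Om. Vf KK Om A (gc n (cstep i k sg c)) t x)"
proof (rule polar_sum[OF fO clO rfl_rfl rfl_side[OF odd]])
  show "maj (rfl i k) (Hs i k sg) (Vf KK Om A (gc n c) t) (Vf KK Om A (gc n (cstep i k sg c)) t)"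
  proof (rule polar[OF fO clO rfl_rfl rfl_side[OF odd] clA])
    show "\<And>x u. x \<in> Hs i k sg \<Longrightarrow> u \<in> Hs i k sg \<Longrightarrow> KK x (rfl i k u) \<le> KK x u" by (rule K_ab)
    show "\<And>x u. 0 \<le> KK x u" by (rule pk_nonneg)
    show "\<And>x u. KK (rfl i k x) (rfl i k u) = KK x u" by (simp add: rfl_minus pk_neg)
    show "\<And>x u. KK (rfl i k x) u = KK x (rfl i k u)" by (simp add: rfl_minus2 pk_neg)
    show "\<And>s x. 0 \<le> gc n c s x" by (simp add: gc_def)
    show "\<And>s x. x \<in> Hs i k sg \<Longrightarrow> gc n (cstep i k sg c) s x = max (gc n c s x) (gc n c s (rfl i k x))"
      using trap[OF odd] by blast
    show "\<And>s x. x \<in> Hs i k sg \<Longrightarrow> gc n (cstep i k sg c) s (rfl i k x) = min (gc n c s x) (gc n c s (rfl i k x))"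
      using trap[OF odd] by blast
  qed
qed

lemma Dv_step:
  fixes x0 :: "int^'d::finite"
  assumes odd: "odd k" and mu: "mu t (cstep i k sg c) \<le> mu t c"
  shows "Dv x0 t n (cstep i k sg c) \<le> Dv x0 t n c"
proof -
  define R where "R = int t + int n + mu t c"
  define A :: "(int^'d) set" where "A = Box R \<union> rfl i k ` Box R"
  define Om :: "(int^'d) set" where "Om = Box (R + int t) \<union> rfl i k ` Box (R + int t)"
  have fA: "finite A" unfolding A_def by (simp add: finite_Box)
  have fO: "finite Om" unfolding Om_def by (simp add: finite_Box)
  have BA: "Box (int t + int n + mu t c) \<subseteq> A" unfolding A_def R_def by auto
  have BA': "Box (int t + int n + mu t (cstep i k sg c)) \<subseteq> A"
    unfolding A_def R_def using mu by (auto intro: Box_mono)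
  have cl: "x \<in> Om" if a: "a \<in> A" and xa: "x - a \<in> Box (int t)" for a x
  proof (cases "a \<in> Box R")
    case True
    from Box_add[OF True xa] show ?thesis unfolding Om_def by simp
  next
    case False
    then obtain b where b: "b \<in> Box R" and ab: "a = rfl i k b" using a unfolding A_def by auto
    have "rfl i k x - b = negc i (x - a)" using rfl_minus2[of i k x b] by (simp add: ab)
    then have "rfl i k x - b \<in> Box (int t)" using xa by (simp add: Box_negc)
    from Box_add[OF b this] have "rfl i k x \<in> Box (R + int t)" by simp
    then have "rfl i k (rfl i k x) \<in> rfl i k ` Box (R + int t)" by blast
    thus ?thesis unfolding Om_def by simp
  qed
  have clU: "rfl i k x \<in> B \<union> rfl i k ` B \<longleftrightarrow> x \<in> B \<union> rfl i k ` B" for x B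
  proof
    assume "rfl i k x \<in> B \<union> rfl i k ` B"
    then consider "rfl i k x \<in> B" | y where "y \<in> B" "rfl i k x = rfl i k y" by blast
    then show "x \<in> B \<union> rfl i k ` B"
    proof cases
      case 1 then have "rfl i k (rfl i k x) \<in> rfl i k ` B" by blast
      thus ?thesis by simp
    next
      case 2 then have "x = y" by (metis rfl_rfl)
      thus ?thesis using 2 by simp
    qed
  next
    assume "x \<in> B \<union> rfl i k ` B"
    then consider "x \<in> B" | y where "y \<in> B" "x = rfl i k y" by blast
    then show "rfl i k x \<in> B \<union> rfl i k ` B"
    proof cases
      case 1 thus ?thesis by blast
    next
      case 2 thus ?thesis by simp
    qed
  qed
  have clO: "rfl i k x \<in> Om" if "x \<in> Om" for x
    using that clU unfolding Om_def by blast
  have clA: "rfl i k x \<in> A \<longleftrightarrow> x \<in> A" for x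
    using clU unfolding A_def by blast
  have "Dv x0 t n (cstep i k sg c) = real (card A) - (\<Sum>x\<in>Om. Vf KK Om A (gc n (cstep i k sg c)) t x)"
    by (rule Dv_repr[OF fA fO BA' cl])
  also have "\<dots> \<le> real (card A) - (\<Sum>x\<in>Om. Vf KK Om A (gc n c) t x)"
    using Vsum_step[OF odd fO clO clA, of n c t sg] by linarith
  also have "\<dots> = Dv x0 t n c" by (rule Dv_repr[OF fA fO BA cl, symmetric])
  finally show ?thesis .
qed




lemma mu_nonneg: "0 \<le> mu t c" unfolding mu_def by (intro sum_nonneg) auto

lemma mu_zero: assumes "mu t c = 0" "s \<le> t" shows "c s = 0"
proof -
  have "(\<Sum>i\<in>UNIV. \<bar>c s $ i\<bar>) = 0"
    using assms unfolding mu_def by (subst (asm) sum_nonneg_eq_0_iff) (auto intro: sum_nonneg)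
  then have "\<forall>i. \<bar>c s $ i\<bar> = 0" by (subst (asm) sum_nonneg_eq_0_iff) auto
  thus ?thesis by (simp add: vec_eq_iff)
qed

lemma Dv_cong: assumes "\<And>s. s \<le> t \<Longrightarrow> c s = c' s" shows "Dv x0 t n c = Dv x0 t n c'"
proof -
  have "(\<Union>s\<in>{0..t}. (\<lambda>q. X ! s + c s + q) ` box_Q n) = (\<Union>s\<in>{0..t}. (\<lambda>q. X ! s + c' s + q) ` box_Q n)" for X
    using assms by (intro SUP_cong) auto
  thus ?thesis unfolding Dv_def by simp
qed

lemma cstep_comp:
  assumes "- (c s) \<in> Hs i k sg"
  shows "cstep i k sg c s $ j = (if j = i then - (k - (- (c s)) $ i) else c s $ j)"
  using assms by (simp add: cstep_def rfl_def)

lemma mu_step: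
  assumes dec: "\<And>s. s \<le> t \<Longrightarrow> - (c s) \<in> Hs i k sg \<Longrightarrow> \<bar>k - (- (c s)) $ i\<bar> < \<bar>(- (c s)) $ i\<bar>"
    and ex: "\<exists>s\<le>t. - (c s) \<in> Hs i k sg"
  shows "mu t (cstep i k sg c) < mu t c"
  unfolding mu_def
proof (rule sum_strict_mono_ex1)
  have per: "(\<Sum>j\<in>UNIV. \<bar>cstep i k sg c s $ j\<bar>) < (\<Sum>j\<in>UNIV. \<bar>c s $ j\<bar>)"
    if s: "s \<le> t" and H: "- (c s) \<in> Hs i k sg" for s
  proof (rule sum_strict_mono_ex1)
    show "finite (UNIV :: 'a set)" by simp
    show "\<forall>j\<in>UNIV. \<bar>cstep i k sg c s $ j\<bar> \<le> \<bar>c s $ j\<bar>"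
      using dec[OF s H] by (auto simp: cstep_comp[of c s i k sg, OF H])
    show "\<exists>j\<in>UNIV. \<bar>cstep i k sg c s $ j\<bar> < \<bar>c s $ j\<bar>"
      using dec[OF s H] by (auto simp: cstep_comp[of c s i k sg, OF H] intro!: bexI[of _ i])
  qed
  show "finite {0..t}" by simp
  show "\<forall>s\<in>{0..t}. (\<Sum>j\<in>UNIV. \<bar>cstep i k sg c s $ j\<bar>) \<le> (\<Sum>j\<in>UNIV. \<bar>c s $ j\<bar>)"
  proof
    fix s assume "s \<in> {0..t}"
    thus "(\<Sum>j\<in>UNIV. \<bar>cstep i k sg c s $ j\<bar>) \<le> (\<Sum>j\<in>UNIV. \<bar>c s $ j\<bar>)"
      using per[of s] by (cases "- (c s) \<in> Hs i k sg") (auto simp: cstep_def)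
  qed
  show "\<exists>s\<in>{0..t}. (\<Sum>j\<in>UNIV. \<bar>cstep i k sg c s $ j\<bar>) < (\<Sum>j\<in>UNIV. \<bar>c s $ j\<bar>)"
  proof -
    obtain s where "s \<le> t" "- (c s) \<in> Hs i k sg" using ex by blast
    thus ?thesis using per[of s] by auto
  qed
qed

lemma exists_step:
  assumes "mu t c \<noteq> 0"
  shows "\<exists>i k sg. odd k \<and> mu t (cstep i k sg c) < mu t c"
proof -
  obtain s0 i where s0: "s0 \<le> t" and nz: "c s0 $ i \<noteq> 0"
  proof -
    have "\<not> (\<forall>s\<le>t. \<forall>i. c s $ i = 0)"
    proof
      assume "\<forall>s\<le>t. \<forall>i. c s $ i = 0"
      then have "mu t c = 0" unfolding mu_def by (intro sum.neutral) auto
      thus False using assms by simp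
    qed
    thus ?thesis using that by blast
  qed
  define E where "E = (\<lambda>s. (- (c s)) $ i) ` {0..t}"
  have fE: "finite E" "E \<noteq> {}" unfolding E_def by auto
  show ?thesis
  proof (cases "\<exists>s\<le>t. 0 < (- (c s)) $ i")
    case True
    define m where "m = Max E"
    have mge: "(- (c s)) $ i \<le> m" if "s \<le> t" for s
      unfolding m_def E_def using that by (intro Max_ge) auto
    have "m \<in> E" unfolding m_def by (rule Max_in[OF fE])
    then obtain s1 where s1: "s1 \<le> t" "(- (c s1)) $ i = m" unfolding E_def by auto
    have mpos: "0 < m" using True mge by force
    have "odd (2 * m - 1)" by simp
    moreover have "mu t (cstep i (2 * m - 1) True c) < mu t c"
    proof (rule mu_step)
      fix s assume s: "s \<le> t" and H: "- c s \<in> Hs i (2 * m - 1) True"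
      have "(- (c s)) $ i = m" using mge[OF s] H by (auto simp: Hs_def)
      thus "\<bar>2 * m - 1 - (- c s) $ i\<bar> < \<bar>(- c s) $ i\<bar>" using mpos by simp
    next
      show "\<exists>s\<le>t. - c s \<in> Hs i (2 * m - 1) True" using s1 by (auto simp: Hs_def)
    qed
    ultimately show ?thesis by blast
  next
    case False
    define m where "m = Min E"
    have mle: "m \<le> (- (c s)) $ i" if "s \<le> t" for s
      unfolding m_def E_def using that by (intro Min_le) auto
    have "m \<in> E" unfolding m_def by (rule Min_in[OF fE])
    then obtain s1 where s1: "s1 \<le> t" "(- (c s1)) $ i = m" unfolding E_def by auto
    have "(- (c s0)) $ i < 0" using False s0 nz by force
    then have mneg: "m < 0" using mle[OF s0] by simp
    have "odd (2 * m + 1)" by simp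
    moreover have "mu t (cstep i (2 * m + 1) False c) < mu t c"
    proof (rule mu_step)
      fix s assume s: "s \<le> t" and H: "- c s \<in> Hs i (2 * m + 1) False"
      have "(- (c s)) $ i = m" using mle[OF s] H by (auto simp: Hs_def)
      thus "\<bar>2 * m + 1 - (- c s) $ i\<bar> < \<bar>(- c s) $ i\<bar>" using mneg by simp
    next
      show "\<exists>s\<le>t. - c s \<in> Hs i (2 * m + 1) False" using s1 by (auto simp: Hs_def)
    qed
    ultimately show ?thesis by blast
  qed
qed

lemma Dv_ge0: "Dv x0 t n (\<lambda>_. 0) \<le> Dv x0 t n c"
proof (induction "nat (mu t c)" arbitrary: c rule: less_induct)
  case less
  show ?case
  proof (cases "mu t c = 0")
    case True
    have "Dv x0 t n c = Dv x0 t n (\<lambda>_. 0)" by (rule Dv_cong) (use mu_zero[OF True] in auto)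
    thus ?thesis by simp
  next
    case False
    then obtain i k sg where odd: "odd k" and lt: "mu t (cstep i k sg c) < mu t c"
      using exists_step by blast
    have "nat (mu t (cstep i k sg c)) < nat (mu t c)" using lt mu_nonneg[of t "cstep i k sg c"] by simp
    then have "Dv x0 t n (\<lambda>_. 0) \<le> Dv x0 t n (cstep i k sg c)" by (rule less.hyps)
    also have "\<dots> \<le> Dv x0 t n c" by (rule Dv_step[OF odd]) (use lt in simp)
    finally show ?thesis .
  qed
qed

theorem proposition1p4:
  fixes x0 :: "int ^ 'd::finite" and f :: "nat \<Rightarrow> int ^ 'd" and t n :: nat
  shows "measure_pmf.expectation (lazy_walk x0 t)
           (\<lambda>X. vol (\<Union>s\<in>{0..t}. (\<lambda>q. X ! s + f s + q) ` box_Q n))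
         \<ge> measure_pmf.expectation (lazy_walk x0 t)
           (\<lambda>X. vol (\<Union>s\<in>{0..t}. (\<lambda>q. X ! s + q) ` box_Q n))"
proof -
  have "Dv x0 t n (\<lambda>_. 0) \<le> Dv x0 t n f" by (rule Dv_ge0)
  thus ?thesis by (simp add: Dv_def)
qed


end
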